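(* Let $m,k\ge1$, $\mathbf T\in M(m,k)$ and $\sigma$ a permutation of $\mathrm{Range}(\mathbf T)$ such that the $(\mathbf T,\sigma)$-graph is connected. Let $a(\sigma)$ be the number of $q\in\mathrm{Range}(\mathbf T)$ with $\sigma(q)\ne q$. Then \[ km-|\mathbf T|+a(\sigma)\ge m-1+\mathbf 1[\sigma\ne \mathrm{id}]. \]
   Context: $[p]=\{1,\dots,p\}$. $M(m,k)$ is the set of tuples $\mathbf T=(T_1,\dots,T_m)$ with each $T_i=(T_{i,1},\dots,T_{i,k})\in[km]^k$ having pairwise distinct entries; $\mathrm{Range}(\mathbf T)=\{T_{i,j}\}$ and $|\mathbf T|=|\mathrm{Range}(\mathbf T)|$. For a permutation $\sigma$ of $\mathrm{Range}(\mathbf T)$, the $(\mathbf T,\sigma)$-graph has vertex set $\{(i,j):i\in[m],j\in[k]\}$, with a black edge between $(i,j)$ and $(i,j+1)$ ($j\le k-1$), a solid red edge between distinct $(i,j),(i',j')$ with $T_{i,j}=T_{i',j'}$, and a dotted red edge between $(i,j),(i',j')$ with $T_{i,j}\neq T_{i',j'}$ and $\sigma(T_{i,j})=T_{i',j'}$ or $\sigma(T_{i',j'})=T_{i,j}$. *)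

theory Defs
  imports "HOL-Combinatorics.Permutations"
begin

text \<open>A tuple T = (T_1,...,T_m) with T_i = (T_{i,1},...,T_{i,k}) is encoded as a function
  T :: nat => nat => nat, with T i j = T_{i,j} for i in {1..m}, j in {1..k}.\<close>

definition inM :: "nat \<Rightarrow> nat \<Rightarrow> (nat \<Rightarrow> nat \<Rightarrow> nat) \<Rightarrow> bool" where
  "inM m k T \<longleftrightarrow>
     (\<forall>i\<in>{1..m}. (\<forall>j\<in>{1..k}. T i j \<in> {1..k*m}) \<and> inj_on (T i) {1..k})"

definition RangeT :: "nat \<Rightarrow> nat \<Rightarrow> (nat \<Rightarrow> nat \<Rightarrow> nat) \<Rightarrow> nat set" where
  "RangeT m k T = {T i j | i j. i \<in> {1..m} \<and> j \<in> {1..k}}"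

definition vertsT :: "nat \<Rightarrow> nat \<Rightarrow> (nat \<times> nat) set" where
  "vertsT m k = {1..m} \<times> {1..k}"

text \<open>Edges of the (T,sigma)-graph (black, solid red, dotted red), as a symmetric relation.\<close>
definition edgesT :: "nat \<Rightarrow> nat \<Rightarrow> (nat \<Rightarrow> nat \<Rightarrow> nat) \<Rightarrow> (nat \<Rightarrow> nat)
    \<Rightarrow> ((nat \<times> nat) \<times> (nat \<times> nat)) set" where
  "edgesT m k T \<sigma> = {((i,j),(i',j')). (i,j) \<in> vertsT m k \<and> (i',j') \<in> vertsT m k \<and>
      ( (i' = i \<and> (j' = j + 1 \<or> j = j' + 1))
      \<or> ((i,j) \<noteq> (i',j') \<and> T i j = T i' j')
      \<or> (T i j \<noteq> T i' j' \<and> (\<sigma> (T i j) = T i' j' \<or> \<sigma> (T i' j') = T i j)))}"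

definition graph_connected :: "nat \<Rightarrow> nat \<Rightarrow> (nat \<Rightarrow> nat \<Rightarrow> nat) \<Rightarrow> (nat \<Rightarrow> nat) \<Rightarrow> bool" where
  "graph_connected m k T \<sigma> \<longleftrightarrow>
     (\<forall>u\<in>vertsT m k. \<forall>v\<in>vertsT m k. (u, v) \<in> (edgesT m k T \<sigma>)\<^sup>*)"

definition a_count :: "nat \<Rightarrow> nat \<Rightarrow> (nat \<Rightarrow> nat \<Rightarrow> nat) \<Rightarrow> (nat \<Rightarrow> nat) \<Rightarrow> nat" where
  "a_count m k T \<sigma> = card {q \<in> RangeT m k T. \<sigma> q \<noteq> q}"

end

theory Submission
  imports Defs
begin

definition Erel :: "'i set \<Rightarrow> ('i \<Rightarrow> 'v) \<Rightarrow> ('i \<Rightarrow> 'v) \<Rightarrow> ('v \<times> 'v) set" where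
  "Erel I e1 e2 = {(x,y). \<exists>i\<in>I. (x = e1 i \<and> y = e2 i) \<or> (x = e2 i \<and> y = e1 i)}"

lemma bfs_card:
  assumes fin: "finite I" and r: "r \<in> V"
    and conn: "\<forall>v\<in>V. (r,v) \<in> (Erel I e1 e2)\<^sup>*"
  shows "card V \<le> card I + 1"
proof -
  define R where "R = Erel I e1 e2"
  define d where "d v = (LEAST n. (r,v) \<in> R ^^ n)" for v
  have dle: "(r,v) \<in> R ^^ n \<Longrightarrow> d v \<le> n" for v n
    unfolding d_def by (rule Least_le)
  have din: "(r,v) \<in> R ^^ n \<Longrightarrow> (r,v) \<in> R ^^ d v" for v n
    unfolding d_def by (rule LeastI)
  have step: "\<exists>i\<in>I. \<exists>u. d v = Suc (d u) \<and> ((e1 i = u \<and> e2 i = v) \<or> (e2 i = u \<and> e1 i = v))"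
    if "v \<in> V" "v \<noteq> r" for v
  proof -
    from conn that have "(r,v) \<in> R\<^sup>*" unfolding R_def by auto
    then obtain n where "(r,v) \<in> R ^^ n" using rtrancl_power by blast
    then have dv: "(r,v) \<in> R ^^ d v" by (rule din)
    have "d v \<noteq> 0"
    proof
      assume "d v = 0"
      with dv have "(r,v) \<in> Id" by simp
      with that show False by simp
    qed
    then obtain n' where n': "d v = Suc n'" by (cases "d v") auto
    with dv obtain u where ru: "(r,u) \<in> R ^^ n'" and uv: "(u,v) \<in> R" by auto
    have "d u \<le> n'" using ru by (rule dle)
    moreover have "(r,u) \<in> R ^^ d u" using ru by (rule din)
    then have "(r,v) \<in> R ^^ Suc (d u)" using uv by auto
    then have "d v \<le> Suc (d u)" by (rule dle)
    ultimately have "d v = Suc (d u)" using n' by simp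
    with uv show ?thesis unfolding R_def Erel_def by auto
  qed
  define f where "f v = (SOME i. i \<in> I \<and> (\<exists>u. d v = Suc (d u) \<and> ((e1 i = u \<and> e2 i = v) \<or> (e2 i = u \<and> e1 i = v))))" for v
  have fP: "f v \<in> I \<and> (\<exists>u. d v = Suc (d u) \<and> ((e1 (f v) = u \<and> e2 (f v) = v) \<or> (e2 (f v) = u \<and> e1 (f v) = v)))"
    if "v \<in> V" "v \<noteq> r" for v
    proof -
    from step[OF that] obtain i0 where "i0 \<in> I \<and> (\<exists>u. d v = Suc (d u) \<and> ((e1 i0 = u \<and> e2 i0 = v) \<or> (e2 i0 = u \<and> e1 i0 = v)))" by blast
    then show ?thesis unfolding f_def by (rule someI)
  qed
  have inj: "inj_on f (V - {r})"
  proof (rule inj_onI)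
    fix v w assume v: "v \<in> V - {r}" and w: "w \<in> V - {r}" and eq: "f v = f w"
    from fP[of v] v obtain u where u: "d v = Suc (d u)" "(e1 (f v) = u \<and> e2 (f v) = v) \<or> (e2 (f v) = u \<and> e1 (f v) = v)" by auto
    from fP[of w] w obtain u' where u': "d w = Suc (d u')" "(e1 (f w) = u' \<and> e2 (f w) = w) \<or> (e2 (f w) = u' \<and> e1 (f w) = w)" by auto
    show "v = w" using u u' eq by auto
  qed
  have img: "f ` (V - {r}) \<subseteq> I" using fP by auto
  have "card (V - {r}) \<le> card I" using card_inj_on_le[OF inj img fin] .
  then show ?thesis using r by (cases "finite V") (auto simp: card_Diff_singleton)
qed

lemma Erel_mono: "I \<subseteq> J \<Longrightarrow> Erel I e1 e2 \<subseteq> Erel J e1 e2"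
  unfolding Erel_def by auto

lemma Erel_sym: "(x,y) \<in> (Erel I e1 e2)\<^sup>* \<Longrightarrow> (y,x) \<in> (Erel I e1 e2)\<^sup>*"
proof -
  have "converse (Erel I e1 e2) = Erel I e1 e2" unfolding Erel_def by auto
  moreover assume "(x,y) \<in> (Erel I e1 e2)\<^sup>*"
  ultimately show ?thesis by (metis converseD rtrancl_converseI)
qed

theorem mainTheorem7:
  fixes m k :: nat and T :: "nat \<Rightarrow> nat \<Rightarrow> nat" and \<sigma> :: "nat \<Rightarrow> nat"
  assumes "m \<ge> 1" and "k \<ge> 1"
    and "inM m k T"
    and "\<sigma> permutes RangeT m k T"
    and "graph_connected m k T \<sigma>"
  shows "int (k * m) - int (card (RangeT m k T)) + int (a_count m k T \<sigma>)
           \<ge> int m - 1 + (if \<sigma> \<noteq> id then 1 else 0)"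
proof -
  define R where "R = RangeT m k T"
  define A where "A = {q \<in> R. \<sigma> q \<noteq> q}"
  have finR: "finite R"
  proof -
    have "R \<subseteq> (\<lambda>(i,j). T i j) ` ({1..m} \<times> {1..k})" unfolding R_def RangeT_def by auto
    then show ?thesis by (rule finite_subset) auto
  qed
  have finA: "finite A" using finR unfolding A_def by auto
  define V :: "(nat + nat) set" where "V = Inl ` {1..m} \<union> Inr ` R"
  define I :: "((nat \<times> nat) + nat) set" where "I = Inl ` ({1..m} \<times> {1..k}) \<union> Inr ` A"
  define e1 :: "((nat \<times> nat) + nat) \<Rightarrow> nat + nat" where
    "e1 = case_sum (\<lambda>(i,j). Inl i) (\<lambda>q. Inr q)"
  define e2 :: "((nat \<times> nat) + nat) \<Rightarrow> nat + nat" where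
    "e2 = case_sum (\<lambda>(i,j). Inr (T i j)) (\<lambda>q. Inr (\<sigma> q))"
  have finI: "finite I" unfolding I_def using finA by auto
  have cardV: "card V = m + card R"
    unfolding V_def by (subst card_Un_disjoint) (auto simp: card_image finR)
  have cardI: "card I = k * m + card A"
    unfolding I_def by (subst card_Un_disjoint) (auto simp: card_image finA card_cartesian_product)
  have aA: "a_count m k T \<sigma> = card A" unfolding a_count_def A_def R_def by simp
  let ?E = "Erel I e1 e2"
  have rowedge: "(Inl i, Inr (T i j)) \<in> ?E" if "i \<in> {1..m}" "j \<in> {1..k}" for i j
  proof -
    have "Inl (i,j) \<in> I" using that unfolding I_def by auto
    then show ?thesis unfolding Erel_def by (auto simp: e1_def e2_def intro!: bexI[of _ "Inl (i,j)"])
  qed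
  have sigedge: "(Inr q, Inr (\<sigma> q)) \<in> ?E" if "q \<in> R" "\<sigma> q \<noteq> q" for q
  proof -
    have "Inr q \<in> I" using that unfolding I_def A_def by auto
    then show ?thesis unfolding Erel_def by (auto simp: e1_def e2_def intro!: bexI[of _ "Inr q"])
  qed
  have inR: "T i j \<in> R" if "i \<in> {1..m}" "j \<in> {1..k}" for i j
    unfolding R_def RangeT_def using that by auto
  have e1: "(Inl i, Inl i') \<in> ?E\<^sup>*" if "((i,j),(i',j')) \<in> edgesT m k T \<sigma>" for i j i' j'
  proof -
    from that have v: "i \<in> {1..m}" "j \<in> {1..k}" "i' \<in> {1..m}" "j' \<in> {1..k}"
      and c: "(i' = i \<and> (j' = j + 1 \<or> j = j' + 1))
      \<or> ((i,j) \<noteq> (i',j') \<and> T i j = T i' j')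
      \<or> (T i j \<noteq> T i' j' \<and> (\<sigma> (T i j) = T i' j' \<or> \<sigma> (T i' j') = T i j))"
      unfolding edgesT_def vertsT_def by auto
    have a: "(Inl i, Inr (T i j)) \<in> ?E\<^sup>*" using rowedge[OF v(1,2)] by auto
    have b: "(Inr (T i' j'), Inl i') \<in> ?E\<^sup>*" by (rule Erel_sym[OF r_into_rtrancl[OF rowedge[OF v(3,4)]]])
    have mid: "(Inr (T i j), Inr (T i' j')) \<in> ?E\<^sup>*" if "i' \<noteq> i"
    proof -
      from c that consider "T i j = T i' j'" | "T i j \<noteq> T i' j'" "\<sigma> (T i j) = T i' j'"
        | "T i j \<noteq> T i' j'" "\<sigma> (T i' j') = T i j" by auto
      then show ?thesis
      proof cases
        case 1 then show ?thesis by simp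
      next
        case 2 then show ?thesis using sigedge[OF inR[OF v(1,2)]] by auto
      next
        case 3 then have "(Inr (T i' j'), Inr (T i j)) \<in> ?E\<^sup>*"
          using sigedge[OF inR[OF v(3,4)]] by auto
        then show ?thesis by (rule Erel_sym)
      qed
    qed
    show ?thesis
    proof (cases "i' = i")
      case True then show ?thesis by simp
    next
      case False
      show ?thesis using a mid[OF False] b by (meson rtrancl_trans)
    qed
  qed
  have e2: "(Inl (fst u), Inl (fst v)) \<in> ?E\<^sup>*" if "(u,v) \<in> (edgesT m k T \<sigma>)\<^sup>*" for u v
    using that
  proof (induction rule: rtrancl_induct)
    case base then show ?case by simp
  next
    case (step y z)
    obtain i j where "y = (i,j)" by force
    moreover obtain i' j' where "z = (i',j')" by force
    ultimately have "(Inl (fst y), Inl (fst z)) \<in> ?E\<^sup>*" using e1 step(2) by auto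
    then show ?case using step(3) by (meson rtrancl_trans)
  qed
  have rows: "(Inl 1, Inl i) \<in> ?E\<^sup>*" if "i \<in> {1..m}" for i
  proof -
    have "(1,1) \<in> vertsT m k" "(i,1) \<in> vertsT m k" using assms(1,2) that unfolding vertsT_def by auto
    then have "((1,1),(i,1)) \<in> (edgesT m k T \<sigma>)\<^sup>*" using assms(5) unfolding graph_connected_def by blast
    from e2[OF this] show ?thesis by simp
  qed
  have conn: "\<forall>v\<in>V. (Inl 1, v) \<in> ?E\<^sup>*"
  proof
    fix v assume "v \<in> V"
    then consider i where "i \<in> {1..m}" "v = Inl i" | q where "q \<in> R" "v = Inr q" unfolding V_def by auto
    then show "(Inl 1, v) \<in> ?E\<^sup>*"
    proof cases
      case 1 then show ?thesis using rows by auto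
    next
      case 2
      then obtain i j where ij: "i \<in> {1..m}" "j \<in> {1..k}" "q = T i j" unfolding R_def RangeT_def by auto
      show ?thesis using rows[OF ij(1)] rowedge[OF ij(1,2)] ij(3) 2(2)
        by (meson rtrancl_into_rtrancl)
    qed
  qed
  have r1: "Inl 1 \<in> V" using assms(1) unfolding V_def by auto
  have base: "card V \<le> card I + 1" by (rule bfs_card[OF finI r1 conn])
  show ?thesis
  proof (cases "\<sigma> = id")
    case True
    have h: "int m + int (card R) \<le> int (k*m) + int (card A) + 1" using base cardV cardI by linarith
    then show ?thesis using True aA unfolding R_def by (simp; linarith)
  next
    case False
    then obtain q where q: "\<sigma> q \<noteq> q" by (metis eq_id_iff)
    have qR: "q \<in> R" using assms(4) q unfolding R_def permutes_def by blast
    have perm: "permutation \<sigma>" using assms(4) finR unfolding R_def permutation_permutes by blast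
    define I' where "I' = I - {Inr q}"
    let ?E' = "Erel I' e1 e2"
    have Ainv: "\<sigma> x \<in> A" if "x \<in> A" for x
    proof -
      have inj: "inj \<sigma>" using assms(4) permutes_inj by blast
      have "\<sigma> x \<in> R" using that assms(4) unfolding A_def R_def by (simp add: permutes_in_image)
      moreover have "\<sigma> (\<sigma> x) \<noteq> \<sigma> x" using that unfolding A_def by (simp add: inj_eq[OF inj])
      ultimately show ?thesis unfolding A_def by simp
    qed
    have qA: "q \<in> A" using qR q unfolding A_def by simp
    have powA: "(\<sigma> ^^ j) q \<in> A" for j
      by (induction j) (use qA Ainv in auto)
    obtain n where n: "n > 0" "(\<sigma> ^^ n) q = q" using permutation_self[OF perm] by blast
    define n0 where "n0 = (LEAST n. n > 0 \<and> (\<sigma> ^^ n) q = q)"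
    have n0: "n0 > 0" "(\<sigma> ^^ n0) q = q" unfolding n0_def using LeastI[of "\<lambda>n. n > 0 \<and> (\<sigma> ^^ n) q = q", OF conjI[OF n]] by auto
    have n0min: "(\<sigma> ^^ j) q \<noteq> q" if "0 < j" "j < n0" for j
      using that not_less_Least unfolding n0_def by blast
    have path: "(Inr (\<sigma> q), Inr ((\<sigma> ^^ j) q)) \<in> ?E'\<^sup>*" if "1 \<le> j" "j \<le> n0" for j
      using that
    proof (induction j)
      case 0 then show ?case by simp
    next
      case (Suc j)
      show ?case
      proof (cases "j = 0")
        case True then show ?thesis by simp
      next
        case False
        then have IH: "(Inr (\<sigma> q), Inr ((\<sigma> ^^ j) q)) \<in> ?E'\<^sup>*" using Suc by auto
        have ne: "(\<sigma> ^^ j) q \<noteq> q" using n0min[of j] False Suc(3) by auto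
        have "(Inr ((\<sigma> ^^ j) q), Inr (\<sigma> ((\<sigma> ^^ j) q))) \<in> ?E'"
        proof -
          have "Inr ((\<sigma> ^^ j) q) \<in> I'" using powA[of j] ne unfolding I'_def I_def by auto
          then show ?thesis unfolding Erel_def by (auto simp: e1_def e2_def intro!: bexI[of _ "Inr ((\<sigma> ^^ j) q)"])
        qed
        then show ?thesis using IH by auto
      qed
    qed
    have "(Inr (\<sigma> q), Inr q) \<in> ?E'\<^sup>*" using path[of n0] n0 by auto
    then have qq: "(Inr q, Inr (\<sigma> q)) \<in> ?E'\<^sup>*" by (rule Erel_sym)
    have sub: "?E \<subseteq> ?E'\<^sup>*"
    proof
      fix p assume "p \<in> ?E"
      then obtain x y i where p: "p = (x,y)" "i \<in> I" "(x = e1 i \<and> y = e2 i) \<or> (x = e2 i \<and> y = e1 i)"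
        unfolding Erel_def by auto
      show "p \<in> ?E'\<^sup>*"
      proof (cases "i = Inr q")
        case True
        then have ee: "(e1 i, e2 i) \<in> ?E'\<^sup>*" using qq unfolding e1_def e2_def by simp
        show ?thesis using p ee Erel_sym[OF ee] by auto
      next
        case False
        then have "i \<in> I'" using p(2) unfolding I'_def by auto
        then have "p \<in> ?E'" using p unfolding Erel_def by auto
        then show ?thesis by auto
      qed
    qed
    have conn': "\<forall>v\<in>V. (Inl 1, v) \<in> ?E'\<^sup>*"
    proof
      fix v assume "v \<in> V"
      then have "(Inl 1, v) \<in> ?E\<^sup>*" using conn by auto
      also have "?E\<^sup>* \<subseteq> ?E'\<^sup>*" using sub by (metis rtrancl_subset_rtrancl rtrancl_idemp)
      finally show "(Inl 1, v) \<in> ?E'\<^sup>*" .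
    qed
    have "card V \<le> card I' + 1" by (rule bfs_card[OF _ r1 conn']) (use finI I'_def in auto)
    moreover have "card I' = card I - 1" unfolding I'_def using qA finI by (simp add: I_def)
    moreover have "card I \<ge> 1" using qA finI unfolding I_def by (metis Un_empty card_0_eq empty_iff image_eqI less_one not_le)
    ultimately have h: "int m + int (card R) \<le> int (k*m) + int (card A)" using cardV cardI by linarith
    then show ?thesis using False aA unfolding R_def by (simp; linarith)
  qed
qed

end
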